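(* Let $K$ be a field of characteristic $0$, and let $a(z)=\sum_{i=0}^u a_iz^i$, $b(z)=\sum_{j=0}^v b_jz^j\in K[z]$ with $a_u\ne0$, $b_v\ne0$, $w=\max\{u-2,v-1\}\ge0$, and such that if $u-1=v$ then $a_u(k+u)+b_v\ne0$ for all integers $k\ge0$. Let $L=-a(z)\frac{d}{dz}+b(z)$ and let $f_0,\ldots,f_w\in(1/z)K[[1/z]]$ be linearly independent over $K$ with $L\cdot f_j\in K[z]$ for all $0\le j\le w$. Then \[\bigcap_{j=0}^w\ker\varphi_{f_j}=L^*\cdot K[t].\]
   Context: For $f=\sum_{k\ge0}f_kz^{-k-1}$, $L\cdot f=-af'+bf$ (termwise derivative), and $\varphi_f:K[t]\to K$ is the $K$-linear map with $\varphi_f(t^k)=f_k$. $L^*$ is the adjoint of $L$, acting by $L^*\cdot P(t)=\frac{d}{dt}(a(t)P(t))+b(t)P(t)$, and $L^*\cdot K[t]=\{L^*\cdot P:P\in K[t]\}$. *)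

theory Defs
  imports "HOL-Computational_Algebra.Polynomial"
begin

text \<open>A series f in (1/z)K[[1/z]] is given by its coefficient sequence f :: nat => 'a,
  f = sum_k f k * z^(-k-1). Series with finitely many positive powers of z
  (elements of K((1/z))) are represented by coefficient functions int => 'a,
  g n = coefficient of z^n.\<close>

definition ser_of :: "(nat \<Rightarrow> 'a::zero) \<Rightarrow> int \<Rightarrow> 'a" where
  "ser_of f n = (if n < 0 then f (nat (- n - 1)) else 0)"

definition ser_deriv :: "(int \<Rightarrow> 'a::ring_1) \<Rightarrow> int \<Rightarrow> 'a" where
  "ser_deriv g n = of_int (n + 1) * g (n + 1)"

definition poly_mult_ser :: "'a::comm_ring_1 poly \<Rightarrow> (int \<Rightarrow> 'a) \<Rightarrow> int \<Rightarrow> 'a" where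
  "poly_mult_ser p g n = (\<Sum>i\<le>degree p. coeff p i * g (n - int i))"

definition Lop :: "'a::comm_ring_1 poly \<Rightarrow> 'a poly \<Rightarrow> (nat \<Rightarrow> 'a) \<Rightarrow> int \<Rightarrow> 'a" where
  "Lop a b f n = - poly_mult_ser a (ser_deriv (ser_of f)) n + poly_mult_ser b (ser_of f) n"

definition in_poly_ring :: "(int \<Rightarrow> 'a::zero) \<Rightarrow> bool" where
  "in_poly_ring g \<longleftrightarrow> (\<forall>n<0. g n = 0)"

definition phi :: "(nat \<Rightarrow> 'a::comm_ring_1) \<Rightarrow> 'a poly \<Rightarrow> 'a" where
  "phi f P = (\<Sum>k\<le>degree P. coeff P k * f k)"

definition Ladj :: "'a::idom poly \<Rightarrow> 'a poly \<Rightarrow> 'a poly \<Rightarrow> 'a poly" where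
  "Ladj a b P = pderiv (a * P) + b * P"

end

theory Submission
  imports Defs "Jordan_Normal_Form.Determinant"
begin


lemma phi_bound: "degree P \<le> N \<Longrightarrow> phi f P = (\<Sum>k\<le>N. coeff P k * f k)"
  unfolding phi_def
  by (rule sum.mono_neutral_left) (auto simp: coeff_eq_0)

lemma phi_add: "phi f (P + Q) = phi f P + phi f Q"
proof -
  let ?N = "max (degree P) (degree Q)"
  have "degree (P+Q) \<le> ?N" by (rule degree_add_le) auto
  then show ?thesis
    by (simp add: phi_bound[of _ ?N] phi_bound[of P ?N] phi_bound[of Q ?N] sum.distrib algebra_simps)
qed

lemma phi_smult: "phi f (Polynomial.smult c P) = c * phi f P"
  using phi_bound[of "Polynomial.smult c P" "degree P" f] degree_smult_le[of c P]
  by (simp add: phi_def sum_distrib_left mult.assoc)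

lemma phi_sum: "phi f (\<Sum>x\<in>S. g x) = (\<Sum>x\<in>S. phi f (g x))"
  by (induction S rule: infinite_finite_induct) (auto simp: phi_add phi_def[of _ 0])

lemma phi_monom: "phi f (monom c n) = c * f n"
proof -
  have "(\<Sum>k\<le>n. coeff (monom c n) k * f k) = (\<Sum>k\<le>n. if n = k then c * f k else 0)"
    by (rule sum.cong) (auto simp: coeff_monom)
  then show ?thesis using phi_bound[of "monom c n" n f] degree_monom_le[of c n] by simp
qed

lemma phi_lin_f: "phi (\<lambda>k. \<Sum>j\<in>S. c j * f j k) P = (\<Sum>j\<in>S. c j * phi (f j) P)"
  unfolding phi_def by (simp add: sum_distrib_left sum.swap[of _ S] algebra_simps)

lemma Ladj_add: "Ladj a b (P + Q) = Ladj a b P + Ladj a b Q"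
  by (simp add: Ladj_def algebra_simps pderiv_add)

lemma Ladj_smult: "Ladj a b (Polynomial.smult c P) = Polynomial.smult c (Ladj a b P)"
  by (simp add: Ladj_def algebra_simps pderiv_smult smult_add_right)

lemma Ladj_0: "Ladj a b 0 = 0" by (simp add: Ladj_def)

lemma Ladj_sum: "Ladj a b (\<Sum>x\<in>S. g x) = (\<Sum>x\<in>S. Ladj a b (g x))"
  by (induction S rule: infinite_finite_induct) (auto simp: Ladj_add Ladj_0)

lemma pderiv_sum': "pderiv (\<Sum>x\<in>S. g x) = (\<Sum>x\<in>S. pderiv (g x))"
  by (induction S rule: infinite_finite_induct) (auto simp: pderiv_add)

lemma mult_monom_sum: "(p::'a::comm_ring_1 poly) * monom 1 m = (\<Sum>i\<le>degree p. monom (coeff p i) (i + m))"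
proof -
  have "p * monom 1 m = (\<Sum>i\<le>degree p. monom (coeff p i) i) * monom 1 m"
    by (simp add: poly_as_sum_of_monoms)
  also have "\<dots> = (\<Sum>i\<le>degree p. monom (coeff p i) (i + m))"
    unfolding sum_distrib_right mult_monom by simp
  finally show ?thesis .
qed

lemma phi_Ladj_monom:
  fixes a b :: "'a::idom poly"
  shows "phi f (Ladj a b (monom 1 m)) = Lop a b f (- int m - 1)"
proof -
  have "phi f (Ladj a b (monom 1 m)) =
     (\<Sum>i\<le>degree a. of_nat (i + m) * coeff a i * f (i + m - 1)) +
     (\<Sum>i\<le>degree b. coeff b i * f (i + m))"
    unfolding Ladj_def
    by (simp add: phi_add mult_monom_sum[of a] mult_monom_sum[of b] pderiv_sum' phi_sum
        pderiv_monom phi_monom)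
  also have "\<dots> = Lop a b f (- int m - 1)"
  proof -
    have "(\<Sum>i\<le>degree a. of_nat (i + m) * coeff a i * f (i + m - 1)) =
      - (\<Sum>i\<le>degree a. coeff a i * (of_int (- int m - 1 - int i + 1) *
          (if - int m - 1 - int i + 1 < 0 then f (nat (- (- int m - 1 - int i + 1) - 1)) else 0)))"
      unfolding sum_negf[symmetric]
    proof (rule sum.cong[OF refl])
      fix i assume "i \<in> {..degree a}"
      show "of_nat (i + m) * coeff a i * f (i + m - 1) = - (coeff a i * (of_int (- int m - 1 - int i + 1) *
          (if - int m - 1 - int i + 1 < 0 then f (nat (- (- int m - 1 - int i + 1) - 1)) else 0)))"
      proof (cases "i + m = 0")
        case True then show ?thesis by simp
      next
        case False
        then have "nat (- (- int m - 1 - int i + 1) - 1) = i + m - 1" by simp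
        moreover have "(of_int (- int m - 1 - int i + 1) :: 'a) = - of_nat (i + m)"
          by simp
        moreover have "- int m - 1 - int i + 1 < 0" using False by arith
        moreover have "- int i < int m" using False by arith
        ultimately show ?thesis using False by (auto simp: algebra_simps)
      qed
    qed
    moreover have "(\<Sum>i\<le>degree b. coeff b i * f (i + m)) =
       (\<Sum>i\<le>degree b. coeff b i * (if - int m - 1 - int i < 0 then f (nat (- (- int m - 1 - int i) - 1)) else 0))"
      by (rule sum.cong[OF refl]) (simp add: nat_add_distrib)
    ultimately show ?thesis unfolding Lop_def poly_mult_ser_def ser_deriv_def ser_of_def by simp
  qed
  finally show ?thesis .
qed


lemma phi_Ladj_zero:
  fixes a b :: "'a::idom poly"
  assumes "in_poly_ring (Lop a b f)"
  shows "phi f (Ladj a b P) = 0"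
proof -
  define N where "N = degree P"
  have eq: "P = (\<Sum>m\<le>N. Polynomial.smult (coeff P m) (monom 1 m))"
    unfolding N_def by (simp add: smult_monom poly_as_sum_of_monoms)
  have "Ladj a b P = Ladj a b (\<Sum>m\<le>N. Polynomial.smult (coeff P m) (monom 1 m))"
    using eq by (rule arg_cong)
  also have "\<dots> = (\<Sum>m\<le>N. Polynomial.smult (coeff P m) (Ladj a b (monom 1 m)))"
    by (simp only: Ladj_sum Ladj_smult)
  finally have "phi f (Ladj a b P) = (\<Sum>m\<le>N. coeff P m * phi f (Ladj a b (monom 1 m)))"
    by (simp only: phi_sum phi_smult)
  also have "\<dots> = 0"
    using assms by (simp add: phi_Ladj_monom in_poly_ring_def)
  finally show ?thesis .
qed

lemma coeff_mult_monom1: "coeff ((p::'a::comm_ring_1 poly) * monom 1 m) k = (if k < m then 0 else coeff p (k - m))"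
  by (simp add: mult.commute[of p] coeff_monom_mult)

lemma Ladj_monom_coeff:
  fixes a b :: "'a::idom poly"
  shows "coeff (Ladj a b (monom 1 m)) (m + s) = of_nat (m + s + 1) * coeff a (s + 1) + coeff b s"
  by (simp add: Ladj_def coeff_pderiv coeff_mult_monom1)

lemma deg_pderiv_le: "degree (pderiv (p::'a::idom poly)) \<le> degree p - 1"
  by (rule degree_le) (auto simp: coeff_pderiv coeff_eq_0)

lemma Ladj_monom_degree:
  fixes a b :: "'a::idom poly"
  assumes "degree a \<le> s + 1" "degree b \<le> s"
  shows "degree (Ladj a b (monom 1 m)) \<le> m + s"
proof -
  have "degree (a * monom 1 m) \<le> s + 1 + m"
    using degree_mult_le[of a "monom 1 m"] degree_monom_le[of "1::'a" m] assms by linarith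
  then have 1: "degree (pderiv (a * monom 1 m)) \<le> m + s"
    using deg_pderiv_le[of "a * monom 1 m"] by linarith
  have 2: "degree (b * monom 1 m) \<le> m + s"
    using degree_mult_le[of b "monom 1 m"] degree_monom_le[of "1::'a" m] assms by linarith
  show ?thesis unfolding Ladj_def using 1 2 degree_add_le by blast
qed

lemma decomp:
  fixes a b :: "'a::field poly"
  assumes da: "degree a \<le> s + 1" and db: "degree b \<le> s"
    and s0: "0 < s" and nz: "\<And>m. of_nat (m + s + 1) * coeff a (s + 1) + coeff b s \<noteq> 0"
  shows "\<exists>Q R. P = Ladj a b Q + R \<and> degree R < s"
proof (induction "degree P" arbitrary: P rule: less_induct)
  case less
  show ?case
  proof (cases "degree P < s")
    case True
    then show ?thesis by (intro exI[of _ 0] exI[of _ P]) (simp add: Ladj_0)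
  next
    case False
    define n where "n = degree P"
    define m where "m = n - s"
    have nms: "n = m + s" using False by (simp add: m_def n_def)
    define T where "T = Ladj a b (monom 1 m)"
    define c where "c = lead_coeff P / coeff T n"
    have Tn: "coeff T n \<noteq> 0" unfolding T_def nms using Ladj_monom_coeff[of a b m s] nz[of m] by simp
    have Td: "degree T \<le> n" unfolding T_def nms by (rule Ladj_monom_degree[OF da db])
    define P' where "P' = P - Polynomial.smult c T"
    have dP': "degree P' \<le> n"
      unfolding P'_def using Td degree_diff_le[of P n "Polynomial.smult c T"] degree_smult_le[of c T] n_def
      by simp
    have cP': "coeff P' n = 0"
      unfolding P'_def c_def using Tn n_def by simp
    have "degree P' < n"
    proof (rule ccontr)
      assume "\<not> degree P' < n"
      then have "degree P' = n" using dP' by simp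
      then have "P' = 0" using cP' leading_coeff_0_iff by metis
      then show False using \<open>degree P' = n\<close> False n_def s0 by simp
    qed
    then obtain Q R where QR: "P' = Ladj a b Q + R" "degree R < s"
      using less(1)[of P'] n_def by blast
    have "P = Ladj a b (Q + Polynomial.smult c (monom 1 m)) + R"
      using QR(1) unfolding P'_def T_def by (simp add: Ladj_add Ladj_smult algebra_simps)
    then show ?thesis using QR(2) by blast
  qed
qed

theorem lemma3p4:
  fixes a b :: "'a::field_char_0 poly"
    and w :: nat
    and f :: "nat \<Rightarrow> nat \<Rightarrow> 'a"
  assumes "a \<noteq> 0" and "b \<noteq> 0"
    and "int w = max (int (degree a) - 2) (int (degree b) - 1)"
    and "int (degree a) - 1 = int (degree b) \<Longrightarrow>
           \<forall>k::nat. lead_coeff a * of_nat (k + degree a) + lead_coeff b \<noteq> 0"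
    and "\<forall>c::nat \<Rightarrow> 'a. (\<forall>k. (\<Sum>j\<le>w. c j * f j k) = 0) \<longrightarrow> (\<forall>j\<le>w. c j = 0)"
    and "\<forall>j\<le>w. in_poly_ring (Lop a b (f j))"
  shows "{P. \<forall>j\<le>w. phi (f j) P = 0} = range (Ladj a b)"
proof -
  define s where "s = w + 1"
  have da: "degree a \<le> s + 1" and db: "degree b \<le> s" using assms(3) unfolding s_def by linarith+
  have nz: "of_nat (m + s + 1) * coeff a (s + 1) + coeff b s \<noteq> 0" for m
  proof (cases "degree a = s + 1")
    case ta: True
    show ?thesis
    proof (cases "degree b = s")
      case True
      then have "\<forall>k::nat. lead_coeff a * of_nat (k + degree a) + lead_coeff b \<noteq> 0"
        using assms(4) ta by simp
      then have h: "lead_coeff a * of_nat (m + degree a) + lead_coeff b \<noteq> 0" by blast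
      have "of_nat (m + s + 1) * coeff a (s + 1) + coeff b s = lead_coeff a * of_nat (m + degree a) + lead_coeff b"
        using ta True by (simp only: mult.commute add.assoc)
      then show ?thesis using h by simp
    next
      case False
      then have "coeff b s = 0" using db by (simp add: coeff_eq_0)
      moreover have "coeff a (s + 1) \<noteq> 0" using ta leading_coeff_neq_0[OF assms(1)] by simp
      moreover have "(of_nat (m + s + 1) :: 'a) \<noteq> 0"
        using of_nat_neq_0[of "m + s"] by simp
      ultimately show ?thesis by simp
    qed
  next
    case False
    then have "coeff a (s + 1) = 0" using da by (simp add: coeff_eq_0)
    moreover have "degree b = s" using False da db assms(3) unfolding s_def by linarith
    moreover have "coeff b s \<noteq> 0" using \<open>degree b = s\<close> leading_coeff_neq_0[OF assms(2)] by simp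
    ultimately show ?thesis by simp
  qed
  have dec: "\<exists>Q R. P = Ladj a b Q + R \<and> degree R \<le> w" for P
  proof -
    have "0 < s" unfolding s_def by simp
    from decomp[OF da db this nz, of P] obtain Q R where "P = Ladj a b Q + R" "degree R < s"
      by blast
    moreover have "degree R \<le> w" using \<open>degree R < s\<close> unfolding s_def by simp
    ultimately show ?thesis by blast
  qed
  have img: "phi (f j) (Ladj a b Q) = 0" if "j \<le> w" for j Q
    using phi_Ladj_zero assms(6) that by blast
  have Rzero: "R = 0" if R: "degree R \<le> w" "\<forall>j\<le>w. phi (f j) R = 0" for R
  proof (rule ccontr)
    assume Rnz: "R \<noteq> 0"
    define n where "n = Suc w"
    define A :: "'a mat" where "A = mat n n (\<lambda>(j,k). f j k)"
    define r where "r = vec n (coeff R)"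
    have A: "A \<in> carrier_mat n n" by (simp add: A_def)
    have "A *\<^sub>v r = 0\<^sub>v n"
    proof (rule eq_vecI)
      fix j assume "j < dim_vec (0\<^sub>v n)"
      then have j: "j < n" by simp
      have "(A *\<^sub>v r) $ j = (\<Sum>k\<in>{0..<n}. f j k * coeff R k)"
        using j by (simp add: A_def r_def scalar_prod_def)
      also have "\<dots> = phi (f j) R"
        using phi_bound[OF R(1), of "f j"]
        by (simp add: n_def atLeast0LessThan lessThan_Suc_atMost mult.commute)
      also have "\<dots> = 0" using R(2) j n_def by simp
      finally show "(A *\<^sub>v r) $ j = 0\<^sub>v n $ j" using j by simp
    qed (simp add: A_def)
    moreover have "r \<noteq> 0\<^sub>v n"
    proof
      assume r0: "r = 0\<^sub>v n"
      have "coeff R k = 0" for k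
      proof (cases "k < n")
        case True
        then have "r $ k = 0\<^sub>v n $ k" using r0 by simp
        then show ?thesis using True by (simp add: r_def)
      next
        case False
        then show ?thesis using R(1) by (simp add: n_def coeff_eq_0)
      qed
      then have "R = 0" by (intro poly_eqI) simp
      then show False using Rnz by simp
    qed
    moreover have "r \<in> carrier_vec n" by (simp add: r_def)
    ultimately have "det A = 0" using det_0_iff_vec_prod_zero[OF A] by blast
    then have "det (transpose_mat A) = 0" using det_transpose[OF A] by simp
    then obtain c where c: "c \<in> carrier_vec n" "c \<noteq> 0\<^sub>v n" "transpose_mat A *\<^sub>v c = 0\<^sub>v n"
      using det_0_iff_vec_prod_zero[of "transpose_mat A" n] A by auto
    define g where "g = (\<lambda>k. \<Sum>j\<le>w. c $ j * f j k)"
    have gw: "g k = 0" if "k \<le> w" for k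
    proof -
      have k: "k < n" using that n_def by simp
      have "(transpose_mat A *\<^sub>v c) $ k = 0" using c(3) k by simp
      moreover have "(transpose_mat A *\<^sub>v c) $ k = (\<Sum>j\<in>{0..<n}. f j k * c $ j)"
        using k c(1) by (simp add: A_def scalar_prod_def)
      ultimately show ?thesis
        by (simp add: g_def n_def atLeast0LessThan lessThan_Suc_atMost mult.commute)
    qed
    have gall: "g k = 0" for k
    proof -
      obtain Q R' where QR: "monom 1 k = Ladj a b Q + R'" "degree R' \<le> w" using dec by blast
      have "g k = phi g (monom 1 k)" by (simp add: phi_monom)
      also have "\<dots> = (\<Sum>j\<le>w. c $ j * phi (f j) (monom 1 k))" unfolding g_def by (rule phi_lin_f)
      also have "\<dots> = (\<Sum>j\<le>w. c $ j * phi (f j) R')"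
        by (intro sum.cong refl) (simp add: QR(1) phi_add img)
      also have "\<dots> = phi g R'" unfolding g_def by (rule phi_lin_f[symmetric])
      also have "\<dots> = (\<Sum>k\<le>w. coeff R' k * g k)" by (rule phi_bound[OF QR(2)])
      also have "\<dots> = 0" by (rule sum.neutral) (simp add: gw)
      finally show ?thesis .
    qed
    have "\<forall>j\<le>w. c $ j = 0" using assms(5)[rule_format, of "\<lambda>j. c $ j"] gall unfolding g_def by blast
    then have "c = 0\<^sub>v n" using c(1) by (intro eq_vecI) (auto simp: n_def)
    with c(2) show False by simp
  qed
  show ?thesis
  proof
    show "range (Ladj a b) \<subseteq> {P. \<forall>j\<le>w. phi (f j) P = 0}" using img by auto
    show "{P. \<forall>j\<le>w. phi (f j) P = 0} \<subseteq> range (Ladj a b)"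
    proof
      fix P assume P: "P \<in> {P. \<forall>j\<le>w. phi (f j) P = 0}"
      obtain Q R where QR: "P = Ladj a b Q + R" "degree R \<le> w" using dec by blast
      have "\<forall>j\<le>w. phi (f j) R = 0" using P QR img by (simp add: phi_add)
      then have "R = 0" using Rzero QR by blast
      then show "P \<in> range (Ladj a b)" using QR by simp
    qed
  qed
qed

end
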